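(* Let $\mathbf C$ be a finite dimensional clone $\tau$-algebra. Then the map $a\mapsto R(a)^\top$ is an isomorphism of clone $\tau$-algebras from $\mathbf C$ onto the block algebra $R_{\mathbf C}^\top=\{R(a)^\top: a\in C\}$, which is a subalgebra of the full functional clone $\tau$-algebra with value domain the $\tau$-reduct $\mathbf C_\tau=(C,\sigma^{\mathbf C})_{\sigma\in\tau}$.
   Context: Let $\omega=\{1,2,\dots\}$. A clone $\tau$-algebra is an algebra $\mathbf C=(C,\sigma^{\mathbf C}\ (\sigma\in\tau),q_n^{\mathbf C}\ (n\ge0),\mathsf e_i^{\mathbf C}\ (i\ge1))$ with $\mathsf e_i$ nullary, $q_n$ of arity $n+1$, satisfying: (C1) $q_n(\mathsf e_i,x_1,\dots,x_n)=x_i$ ($1\le i\le n$); (C2) $q_n(\mathsf e_j,x_1,\dots,x_n)=\mathsf e_j$ ($j>n$); (C3) $q_n(x,\mathsf e_1,\dots,\mathsf e_n)=x$; (C4) $q_k(x,y_1,\dots,y_k)=q_n(x,y_1,\dots,y_k,\mathsf e_{k+1},\dots,\mathsf e_n)$ ($n>k$); (C5) $q_n(q_n(x,\mathbf y),\mathbf z)=q_n(x,q_n(y_1,\mathbf z),\dots,q_n(y_n,\mathbf z))$ with $\mathbf y,\mathbf z$ of length $n$; (C6) $q_n(\sigma(x_1,\dots,x_k),\mathbf y)=\sigma(q_n(x_1,\mathbf y),\dots,q_n(x_k,\mathbf y))$ for $\sigma\in\tau$ of arity $k$. An element $a$ is independent of $\mathsf e_n$ if $q_n(a,\mathsf e_1,\dots,\mathsf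 e_{n-1},\mathsf e_{n+1})=a$; its dimension $\gamma(a)$ is $\omega$ if it depends on infinitely many $\mathsf e_i$, $0$ if on none, and otherwise the largest $i$ with $a$ dependent on $\mathsf e_i$. $\mathbf C$ is finite dimensional if every element has finite dimension. A function $f:C^k\to C$ is $\mathbf C$-representable if $f(\mathsf e_1,\dots,\mathsf e_k)$ has dimension $\le k$ and $f(a_1,\dots,a_k)=q_k(f(\mathsf e_1,\dots,\mathsf e_k),a_1,\dots,a_k)$ for all $a_1,\dots,a_k\in C$. For $a$ of finite dimension, $R(a)$ is the set of all $\mathbf C$-representable functions $f$ (of any arity $n$) with $f(\mathsf e_1,\dots,\mathsf e_n)=a$. For a finitary $f:C^n\to C$ the top extension is $f^\top:C^\omega\to C$, $f^\top(s)=f(s_1,\dots,s_n)$; all members of $R(a)$ have the same top extension, denoted $R(a)^\top$. For a $\tau$-algebra $\mathbf A$, the full functional clone $\tau$-algebra with value domain $\mathbf A$ has universe all functions $A^\omega\to A$ and operations $\mathsf e_i(s)=s_i$, $q_n(\varphi,\psi_1,\dots,\psi_n)(s)=\varphi(s[\psi_1(s),\dots,\psi_n(s)])$, $\sigma(\psi_1,\dots,\psi_n)(s)=\sigma^{\mathbf A}(\psi_1(s),\dots,\psi_n(s))$, where $s[b_1,\dots,b_n]$ replaces the first $n$ entries of $s$ by $b_1,\dots,b_n$. *)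

theory Defs
  imports Main
begin

text \<open>The signature tau is given by a type 's of
operation symbols together with an arity function ar.  The operation sigma is
sg sigma, applied to a list of ar sigma arguments; q n x ys is q_n(x,y_1,...,y_n) with
length ys = n; e i is the nullary e_i (i >= 1; e 0 is unused).\<close>

definition clone_alg ::
  "('s \<Rightarrow> nat) \<Rightarrow> 'c set \<Rightarrow> ('s \<Rightarrow> 'c list \<Rightarrow> 'c) \<Rightarrow> (nat \<Rightarrow> 'c \<Rightarrow> 'c list \<Rightarrow> 'c) \<Rightarrow> (nat \<Rightarrow> 'c) \<Rightarrow> bool"
where
  "clone_alg ar C sg q e \<longleftrightarrow>
     (\<forall>i\<ge>1. e i \<in> C)
   \<and> (\<forall>n x ys. x \<in> C \<longrightarrow> length ys = n \<longrightarrow> set ys \<subseteq> C \<longrightarrow> q n x ys \<in> C)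
   \<and> (\<forall>s xs. length xs = ar s \<longrightarrow> set xs \<subseteq> C \<longrightarrow> sg s xs \<in> C)
   \<comment> \<open>(C1)\<close>
   \<and> (\<forall>n i xs. 1 \<le> i \<longrightarrow> i \<le> n \<longrightarrow> length xs = n \<longrightarrow> set xs \<subseteq> C \<longrightarrow> q n (e i) xs = xs ! (i - 1))
   \<comment> \<open>(C2)\<close>
   \<and> (\<forall>n j xs. j > n \<longrightarrow> length xs = n \<longrightarrow> set xs \<subseteq> C \<longrightarrow> q n (e j) xs = e j)
   \<comment> \<open>(C3)\<close>
   \<and> (\<forall>n x. x \<in> C \<longrightarrow> q n x (map e [1..<n+1]) = x)
   \<comment> \<open>(C4)\<close>
   \<and> (\<forall>n k x ys. n > k \<longrightarrow> x \<in> C \<longrightarrow> length ys = k \<longrightarrow> set ys \<subseteq> C \<longrightarrow>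
        q k x ys = q n x (ys @ map e [k+1..<n+1]))
   \<comment> \<open>(C5)\<close>
   \<and> (\<forall>n x ys zs. x \<in> C \<longrightarrow> length ys = n \<longrightarrow> set ys \<subseteq> C \<longrightarrow> length zs = n \<longrightarrow> set zs \<subseteq> C \<longrightarrow>
        q n (q n x ys) zs = q n x (map (\<lambda>y. q n y zs) ys))
   \<comment> \<open>(C6)\<close>
   \<and> (\<forall>s xs n ys. length xs = ar s \<longrightarrow> set xs \<subseteq> C \<longrightarrow> length ys = n \<longrightarrow> set ys \<subseteq> C \<longrightarrow>
        q n (sg s xs) ys = sg s (map (\<lambda>x. q n x ys) xs))"

text \<open>a is independent of e_n (n >= 1).\<close>
definition indep :: "(nat \<Rightarrow> 'c \<Rightarrow> 'c list \<Rightarrow> 'c) \<Rightarrow> (nat \<Rightarrow> 'c) \<Rightarrow> 'c \<Rightarrow> nat \<Rightarrow> bool" where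
  "indep q e a n \<longleftrightarrow> q n a (map e [1..<n] @ [e (n+1)]) = a"

definition deps :: "(nat \<Rightarrow> 'c \<Rightarrow> 'c list \<Rightarrow> 'c) \<Rightarrow> (nat \<Rightarrow> 'c) \<Rightarrow> 'c \<Rightarrow> nat set" where
  "deps q e a = {n. 1 \<le> n \<and> \<not> indep q e a n}"

definition finite_dim :: "(nat \<Rightarrow> 'c \<Rightarrow> 'c list \<Rightarrow> 'c) \<Rightarrow> (nat \<Rightarrow> 'c) \<Rightarrow> 'c \<Rightarrow> bool" where
  "finite_dim q e a \<longleftrightarrow> finite (deps q e a)"

definition dim :: "(nat \<Rightarrow> 'c \<Rightarrow> 'c list \<Rightarrow> 'c) \<Rightarrow> (nat \<Rightarrow> 'c) \<Rightarrow> 'c \<Rightarrow> nat" where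
  "dim q e a = Max (insert 0 (deps q e a))"

text \<open>A k-ary function on C is represented by f :: 'c list => 'c (only values on lists of
length k with entries in C matter).\<close>
definition representable ::
  "'c set \<Rightarrow> (nat \<Rightarrow> 'c \<Rightarrow> 'c list \<Rightarrow> 'c) \<Rightarrow> (nat \<Rightarrow> 'c) \<Rightarrow> nat \<Rightarrow> ('c list \<Rightarrow> 'c) \<Rightarrow> bool" where
  "representable C q e k f \<longleftrightarrow>
     f (map e [1..<k+1]) \<in> C \<and>
     finite_dim q e (f (map e [1..<k+1])) \<and> dim q e (f (map e [1..<k+1])) \<le> k \<and>
     (\<forall>as. length as = k \<longrightarrow> set as \<subseteq> C \<longrightarrow> f as = q k (f (map e [1..<k+1])) as)"

definition Rset :: "'c set \<Rightarrow> (nat \<Rightarrow> 'c \<Rightarrow> 'c list \<Rightarrow> 'c) \<Rightarrow> (nat \<Rightarrow> 'c) \<Rightarrow> 'c \<Rightarrow> (nat \<times> ('c list \<Rightarrow> 'c)) set" where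
  "Rset C q e a = {(n, f). representable C q e n f \<and> f (map e [1..<n+1]) = a}"

text \<open>omega-sequences over C: s_i for i >= 1; coordinate 0 is unused (fixed to undefined).\<close>
definition seqs :: "'c set \<Rightarrow> (nat \<Rightarrow> 'c) set" where
  "seqs C = {s. (\<forall>i\<ge>1. s i \<in> C) \<and> s 0 = undefined}"

text \<open>Universe of the full functional clone algebra: all functions C^omega -> C (extensional).\<close>
definition FF :: "'c set \<Rightarrow> ((nat \<Rightarrow> 'c) \<Rightarrow> 'c) set" where
  "FF C = {\<phi>. (\<forall>s\<in>seqs C. \<phi> s \<in> C) \<and> (\<forall>s. s \<notin> seqs C \<longrightarrow> \<phi> s = undefined)}"

definition seq_upd :: "(nat \<Rightarrow> 'c) \<Rightarrow> 'c list \<Rightarrow> (nat \<Rightarrow> 'c)" where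
  "seq_upd s bs = (\<lambda>i. if 1 \<le> i \<and> i \<le> length bs then bs ! (i - 1) else s i)"

definition ff_e :: "'c set \<Rightarrow> nat \<Rightarrow> (nat \<Rightarrow> 'c) \<Rightarrow> 'c" where
  "ff_e C i = (\<lambda>s. if s \<in> seqs C then s i else undefined)"

definition ff_q :: "'c set \<Rightarrow> nat \<Rightarrow> ((nat \<Rightarrow> 'c) \<Rightarrow> 'c) \<Rightarrow> ((nat \<Rightarrow> 'c) \<Rightarrow> 'c) list \<Rightarrow> (nat \<Rightarrow> 'c) \<Rightarrow> 'c" where
  "ff_q C n \<phi> \<psi>s = (\<lambda>s. if s \<in> seqs C then \<phi> (seq_upd s (map (\<lambda>\<psi>. \<psi> s) \<psi>s)) else undefined)"

definition ff_sg :: "'c set \<Rightarrow> ('s \<Rightarrow> 'c list \<Rightarrow> 'c) \<Rightarrow> 's \<Rightarrow> ((nat \<Rightarrow> 'c) \<Rightarrow> 'c) list \<Rightarrow> (nat \<Rightarrow> 'c) \<Rightarrow> 'c" where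
  "ff_sg C sg \<sigma> \<psi>s = (\<lambda>s. if s \<in> seqs C then sg \<sigma> (map (\<lambda>\<psi>. \<psi> s) \<psi>s) else undefined)"

definition top_ext :: "'c set \<Rightarrow> nat \<Rightarrow> ('c list \<Rightarrow> 'c) \<Rightarrow> (nat \<Rightarrow> 'c) \<Rightarrow> 'c" where
  "top_ext C n f = (\<lambda>s. if s \<in> seqs C then f (map s [1..<n+1]) else undefined)"

text \<open>R(a)^top: the common top extension of the members of R(a).\<close>
definition Rtop :: "'c set \<Rightarrow> (nat \<Rightarrow> 'c \<Rightarrow> 'c list \<Rightarrow> 'c) \<Rightarrow> (nat \<Rightarrow> 'c) \<Rightarrow> 'c \<Rightarrow> (nat \<Rightarrow> 'c) \<Rightarrow> 'c" where
  "Rtop C q e a = (THE t. \<exists>(n, f) \<in> Rset C q e a. t = top_ext C n f)"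

end

theory Submission
  imports Defs
begin

lemma sum_list_ge_nat: "x \<in> set xs \<Longrightarrow> (f x :: nat) \<le> sum_list (map f xs)"
  by (induction xs) auto

locale CA =
  fixes ar :: "'s \<Rightarrow> nat" and C :: "'c set" and sg :: "'s \<Rightarrow> 'c list \<Rightarrow> 'c"
    and q :: "nat \<Rightarrow> 'c \<Rightarrow> 'c list \<Rightarrow> 'c" and e :: "nat \<Rightarrow> 'c"
  assumes ca: "clone_alg ar C sg q e"
    and fd: "\<forall>a\<in>C. finite_dim q e a"
begin

lemma ca_def: "(\<forall>i\<ge>1. e i \<in> C)
   \<and> (\<forall>n x ys. x \<in> C \<longrightarrow> length ys = n \<longrightarrow> set ys \<subseteq> C \<longrightarrow> q n x ys \<in> C)
   \<and> (\<forall>s xs. length xs = ar s \<longrightarrow> set xs \<subseteq> C \<longrightarrow> sg s xs \<in> C)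
   \<and> (\<forall>n i xs. 1 \<le> i \<longrightarrow> i \<le> n \<longrightarrow> length xs = n \<longrightarrow> set xs \<subseteq> C \<longrightarrow> q n (e i) xs = xs ! (i - 1))
   \<and> (\<forall>n j xs. j > n \<longrightarrow> length xs = n \<longrightarrow> set xs \<subseteq> C \<longrightarrow> q n (e j) xs = e j)
   \<and> (\<forall>n x. x \<in> C \<longrightarrow> q n x (map e [1..<n+1]) = x)
   \<and> (\<forall>n k x ys. n > k \<longrightarrow> x \<in> C \<longrightarrow> length ys = k \<longrightarrow> set ys \<subseteq> C \<longrightarrow>
        q k x ys = q n x (ys @ map e [k+1..<n+1]))
   \<and> (\<forall>n x ys zs. x \<in> C \<longrightarrow> length ys = n \<longrightarrow> set ys \<subseteq> C \<longrightarrow> length zs = n \<longrightarrow> set zs \<subseteq> C \<longrightarrow>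
        q n (q n x ys) zs = q n x (map (\<lambda>y. q n y zs) ys))
   \<and> (\<forall>s xs n ys. length xs = ar s \<longrightarrow> set xs \<subseteq> C \<longrightarrow> length ys = n \<longrightarrow> set ys \<subseteq> C \<longrightarrow>
        q n (sg s xs) ys = sg s (map (\<lambda>x. q n x ys) xs))"
  using ca unfolding clone_alg_def by assumption

lemma e_C: "1 \<le> i \<Longrightarrow> e i \<in> C" using ca_def[THEN conjunct1] by blast
lemma q_C: "x \<in> C \<Longrightarrow> length ys = n \<Longrightarrow> set ys \<subseteq> C \<Longrightarrow> q n x ys \<in> C"
  using ca_def[THEN conjunct2, THEN conjunct1] by blast
lemma sg_C: "length xs = ar s \<Longrightarrow> set xs \<subseteq> C \<Longrightarrow> sg s xs \<in> C"
  using ca_def[THEN conjunct2, THEN conjunct2, THEN conjunct1] by blast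
lemma C1: "1 \<le> i \<Longrightarrow> i \<le> n \<Longrightarrow> length xs = n \<Longrightarrow> set xs \<subseteq> C \<Longrightarrow> q n (e i) xs = xs ! (i - 1)"
  using ca_def[THEN conjunct2, THEN conjunct2, THEN conjunct2, THEN conjunct1] by blast
lemma C2: "j > n \<Longrightarrow> length xs = n \<Longrightarrow> set xs \<subseteq> C \<Longrightarrow> q n (e j) xs = e j"
  using ca_def[THEN conjunct2, THEN conjunct2, THEN conjunct2, THEN conjunct2, THEN conjunct1] by blast
lemma C3: "x \<in> C \<Longrightarrow> q n x (map e [1..<n+1]) = x"
  using ca_def[THEN conjunct2, THEN conjunct2, THEN conjunct2, THEN conjunct2, THEN conjunct2, THEN conjunct1] by blast
lemma C4: "n > k \<Longrightarrow> x \<in> C \<Longrightarrow> length ys = k \<Longrightarrow> set ys \<subseteq> C \<Longrightarrow> q k x ys = q n x (ys @ map e [k+1..<n+1])"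
  using ca_def[THEN conjunct2, THEN conjunct2, THEN conjunct2, THEN conjunct2, THEN conjunct2, THEN conjunct2, THEN conjunct1] by blast
lemma C5: "x \<in> C \<Longrightarrow> length ys = n \<Longrightarrow> set ys \<subseteq> C \<Longrightarrow> length zs = n \<Longrightarrow> set zs \<subseteq> C \<Longrightarrow> q n (q n x ys) zs = q n x (map (\<lambda>y. q n y zs) ys)"
  using ca_def[THEN conjunct2, THEN conjunct2, THEN conjunct2, THEN conjunct2, THEN conjunct2, THEN conjunct2, THEN conjunct2, THEN conjunct1] by blast
lemma C6: "length xs = ar s \<Longrightarrow> set xs \<subseteq> C \<Longrightarrow> length ys = n \<Longrightarrow> set ys \<subseteq> C \<Longrightarrow> q n (sg s xs) ys = sg s (map (\<lambda>x. q n x ys) xs)"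
  using ca_def[THEN conjunct2, THEN conjunct2, THEN conjunct2, THEN conjunct2, THEN conjunct2, THEN conjunct2, THEN conjunct2, THEN conjunct2] by blast

declare upt_Suc[simp del]

lemma setE: "a \<ge> 1 \<Longrightarrow> set (map e [a..<b]) \<subseteq> C" using e_C by auto

lemma drop_one:
  assumes a: "a \<in> C" and ind: "indep q e a (Suc k)" and len: "length zs = k"
    and zC: "set zs \<subseteq> C" and y: "y \<in> C"
  shows "q (Suc k) a (zs @ [y]) = q k a zs"
proof -
  have star: "q (Suc k) a (ws @ [u]) = q (Suc k) a (ws @ [e (Suc (Suc k))])"
    if wl: "length ws = k" and wC: "set ws \<subseteq> C" and uC: "u \<in> C" for ws u
  proof -
    let ?E = "map e [1..<Suc k] @ [e (Suc (Suc k))]"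
    let ?ys = "ws @ [u]"
    have EC: "set ?E \<subseteq> C" using e_C by auto
    have yC: "set ?ys \<subseteq> C" using wC uC by auto
    have aE: "q (Suc k) a ?E = a" using ind unfolding indep_def by simp
    have "q (Suc k) a ?ys = q (Suc k) (q (Suc k) a ?E) ?ys" using aE by simp
    also have "\<dots> = q (Suc k) a (map (\<lambda>v. q (Suc k) v ?ys) ?E)"
      by (rule C5) (use a EC yC wl in auto)
    also have "map (\<lambda>v. q (Suc k) v ?ys) ?E = ws @ [e (Suc (Suc k))]"
    proof -
      have "map (\<lambda>v. q (Suc k) v ?ys) (map e [1..<Suc k]) = ws"
      proof (rule nth_equalityI)
        show "length (map (\<lambda>v. q (Suc k) v ?ys) (map e [1..<Suc k])) = length ws" using wl by simp
        fix i assume "i < length (map (\<lambda>v. q (Suc k) v ?ys) (map e [1..<Suc k]))"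
        then have i: "i < k" by simp
        then have "map (\<lambda>v. q (Suc k) v ?ys) (map e [1..<Suc k]) ! i = q (Suc k) (e (Suc i)) ?ys" by simp
        also have "\<dots> = ?ys ! i" using C1[of "Suc i" "Suc k" ?ys] i wl yC by simp
        also have "\<dots> = ws ! i" using i wl by (simp add: nth_append)
        finally show "map (\<lambda>v. q (Suc k) v ?ys) (map e [1..<Suc k]) ! i = ws ! i" .
      qed
      moreover have "q (Suc k) (e (Suc (Suc k))) ?ys = e (Suc (Suc k))" using C2 wl yC by simp
      ultimately show ?thesis by simp
    qed
    finally show ?thesis .
  qed
  have "q k a zs = q (Suc k) a (zs @ map e [k+1..<Suc k+1])" using C4[of k "Suc k"] a len zC by simp
  also have "\<dots> = q (Suc k) a (zs @ [e (Suc k)])" by (simp add: upt_Suc)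
  also have "\<dots> = q (Suc k) a (zs @ [e (Suc (Suc k))])" using star[of zs "e (Suc k)"] e_C len zC by simp
  also have "\<dots> = q (Suc k) a (zs @ [y])" using star[of zs y] len zC y by simp
  finally show ?thesis by simp
qed

lemma dim_indep:
  assumes "a \<in> C" "dim q e a < m" shows "indep q e a m"
proof -
  have fin: "finite (deps q e a)" using fd assms(1) unfolding finite_dim_def by blast
  have "m \<notin> deps q e a"
  proof
    assume "m \<in> deps q e a"
    then have "m \<le> dim q e a" unfolding dim_def using fin by (simp add: Max_ge)
    with assms(2) show False by simp
  qed
  moreover have "m \<ge> 1" using assms(2) by simp
  ultimately show ?thesis unfolding deps_def by simp
qed

lemma drop_many:
  assumes a: "a \<in> C" and d: "dim q e a \<le> n"
  shows "n \<le> m \<Longrightarrow> length ys = m \<Longrightarrow> set ys \<subseteq> C \<Longrightarrow> q m a ys = q n a (take n ys)"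
proof (induction m arbitrary: ys)
  case 0 then show ?case by simp
next
  case (Suc k)
  show ?case
  proof (cases "n = Suc k")
    case True then show ?thesis using Suc.prems by simp
  next
    case False
    then have nk: "n \<le> k" using Suc.prems by simp
    obtain zs y where ys: "ys = zs @ [y]" and lz: "length zs = k"
      using Suc.prems(2) by (metis length_Suc_conv_rev)
    then have zC: "set zs \<subseteq> C" and yC: "y \<in> C" using Suc.prems by auto
    have "indep q e a (Suc k)" using dim_indep a d nk by simp
    then have "q (Suc k) a ys = q k a zs" using drop_one a lz zC yC ys by simp
    also have "\<dots> = q n a (take n zs)" using Suc.IH nk lz zC by simp
    also have "take n zs = take n ys" using ys nk lz by simp
    finally show ?thesis .
  qed
qed

definition tv where
  "tv a N = (\<lambda>s. if s \<in> seqs C then q N a (map s [1..<N+1]) else undefined)"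

lemma seqs_sub: "s \<in> seqs C \<Longrightarrow> set (map s [1..<N+1]) \<subseteq> C"
  unfolding seqs_def by auto

lemma tv_eq:
  assumes a: "a \<in> C" and d: "dim q e a \<le> N" and NM: "N \<le> M"
  shows "tv a M = tv a N"
  unfolding tv_def
proof (rule ext)
  fix s
  show "(if s \<in> seqs C then q M a (map s [1..<M+1]) else undefined) =
        (if s \<in> seqs C then q N a (map s [1..<N+1]) else undefined)"
  proof (cases "s \<in> seqs C")
    case True
    have "q M a (map s [1..<M+1]) = q N a (take N (map s [1..<M+1]))"
      using drop_many[OF a d NM] seqs_sub[OF True] by simp
    also have "take N (map s [1..<M+1]) = map s [1..<N+1]" using NM by (simp add: take_map take_upt)
    finally show ?thesis using True by simp
  qed simp
qed

lemma tv_eq2: "a \<in> C \<Longrightarrow> dim q e a \<le> N \<Longrightarrow> dim q e a \<le> M \<Longrightarrow> tv a N = tv a M"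
  by (metis nat_le_linear tv_eq)

lemma Rtop_eq:
  assumes a: "a \<in> C" and d: "dim q e a \<le> N"
  shows "Rtop C q e a = tv a N"
proof -
  have te: "top_ext C n f = tv a n" if "(n,f) \<in> Rset C q e a" for n f
  proof -
    from that have r: "representable C q e n f" and fa: "f (map e [1..<n+1]) = a"
      unfolding Rset_def by auto
    show ?thesis unfolding top_ext_def tv_def
    proof (rule ext)
      fix s
      show "(if s \<in> seqs C then f (map s [1..<n+1]) else undefined) =
            (if s \<in> seqs C then q n a (map s [1..<n+1]) else undefined)"
        using r fa seqs_sub[of s n] unfolding representable_def by auto
    qed
  qed
  have dimn: "dim q e a \<le> n" if "(n,f) \<in> Rset C q e a" for n f
    using that unfolding Rset_def representable_def by auto
  have mem: "(dim q e a, \<lambda>as. q (dim q e a) a as) \<in> Rset C q e a"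
    unfolding Rset_def representable_def using C3 a fd by auto
  show ?thesis unfolding Rtop_def
  proof (rule the_equality)
    show "\<exists>(n, f)\<in>Rset C q e a. tv a N = top_ext C n f"
      apply (rule bexI[OF _ mem])
      using te[OF mem] tv_eq2[OF a d, of "dim q e a"] by simp
  next
    fix t assume "\<exists>(n, f)\<in>Rset C q e a. t = top_ext C n f"
    then obtain n f where nf: "(n,f) \<in> Rset C q e a" "t = top_ext C n f" by blast
    then show "t = tv a N" using te dimn tv_eq2 d a by metis
  qed
qed

lemma hom_q:
  assumes x: "x \<in> C" and len: "length ys = n" and yC: "set ys \<subseteq> C"
  shows "Rtop C q e (q n x ys) = ff_q C n (Rtop C q e x) (map (Rtop C q e) ys)"
proof -
  define M where "M = n + dim q e x + dim q e (q n x ys) + sum_list (map (dim q e) ys)"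
  have qC: "q n x ys \<in> C" using q_C x len yC by simp
  have nM: "n \<le> M" unfolding M_def by simp
  have R1: "Rtop C q e (q n x ys) = tv (q n x ys) M" using Rtop_eq qC M_def by simp
  have R2: "Rtop C q e x = tv x M" using Rtop_eq x M_def by simp
  have R3: "Rtop C q e y = tv y M" if "y \<in> set ys" for y
  proof -
    have "dim q e y \<le> M" using sum_list_ge_nat[OF that, of "dim q e"] M_def by simp
    then show ?thesis using Rtop_eq yC that by auto
  qed
  have key: "q n x ys = q M x (ys @ map e [n+1..<M+1])"
  proof (cases "n < M")
    case True then show ?thesis using C4 x len yC by simp
  next
    case False then have "M = n" using nM by simp
    then show ?thesis by simp
  qed
  show ?thesis
  proof (rule ext)
    fix s
    show "Rtop C q e (q n x ys) s = ff_q C n (Rtop C q e x) (map (Rtop C q e) ys) s"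
    proof (cases "s \<in> seqs C")
      case False then show ?thesis unfolding R1 tv_def ff_q_def by simp
    next
      case True
      let ?ss = "map s [1..<M+1]"
      have ssC: "set ?ss \<subseteq> C" using True by (rule seqs_sub)
      define bs where "bs = map (\<lambda>y. q M y ?ss) ys"
      have mapR: "map (\<lambda>\<psi>. \<psi> s) (map (Rtop C q e) ys) = bs"
        unfolding bs_def using R3 True by (simp add: tv_def)
      have bsC: "set bs \<subseteq> C" unfolding bs_def using q_C yC ssC by auto
      have lbs: "length bs = n" using len bs_def by simp
      define s' where "s' = seq_upd s bs"
      have s'seq: "s' \<in> seqs C"
        unfolding seqs_def
      proof (intro CollectI conjI allI impI)
        fix i :: nat assume i: "1 \<le> i"
        show "s' i \<in> C"
        proof (cases "i \<le> n")
          case True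
          then have "bs ! (i - 1) \<in> set bs" using i lbs by (intro nth_mem) simp
          then show ?thesis using True i bsC lbs unfolding s'_def seq_upd_def by auto
        next
          case False
          then show ?thesis using True i lbs unfolding s'_def seq_upd_def seqs_def by auto
        qed
      next
        show "s' 0 = undefined" using True unfolding s'_def seq_upd_def seqs_def by auto
      qed
      have ms': "map s' [1..<M+1] = bs @ map s [n+1..<M+1]"
      proof (rule nth_equalityI)
        show "length (map s' [1..<M+1]) = length (bs @ map s [n+1..<M+1])" using lbs nM by simp
        fix i assume "i < length (map s' [1..<M+1])"
        then have i: "i < M" by simp
        show "map s' [1..<M+1] ! i = (bs @ map s [n+1..<M+1]) ! i"
        proof (cases "i < n")
          case True then show ?thesis using i lbs unfolding s'_def seq_upd_def by (simp add: nth_append)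
        next
          case False then show ?thesis using i lbs unfolding s'_def seq_upd_def by (simp add: nth_append)
        qed
      qed
      have mE: "map (\<lambda>v. q M v ?ss) (map e [n+1..<M+1]) = map s [n+1..<M+1]"
      proof -
        have "q M (e j) ?ss = s j" if "j \<in> set [n+1..<M+1]" for j
        proof -
          have "q M (e j) ?ss = ?ss ! (j - 1)" using that ssC by (intro C1) auto
          also have "\<dots> = s j"
          proof -
            have j: "1 \<le> j" "j - 1 < M" using that by auto
            then have "[1..<M+1] ! (j - 1) = j" by (subst nth_upt) auto
            then show ?thesis using j by simp
          qed
          finally show ?thesis .
        qed
        then show ?thesis by simp
      qed
      have "Rtop C q e (q n x ys) s = q M (q n x ys) ?ss" using True R1 tv_def by simp
      also have "\<dots> = q M (q M x (ys @ map e [n+1..<M+1])) ?ss" using key by simp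
      also have "\<dots> = q M x (map (\<lambda>v. q M v ?ss) (ys @ map e [n+1..<M+1]))"
        by (rule C5) (use x yC ssC len nM setE[of "n+1" "M+1"] in auto)
      also have "\<dots> = q M x (bs @ map s [n+1..<M+1])" by (simp only: map_append mE bs_def)
      also have "\<dots> = q M x (map s' [1..<M+1])" using ms' by simp
      also have "\<dots> = tv x M s'" using s'seq tv_def by simp
      also have "\<dots> = ff_q C n (Rtop C q e x) (map (Rtop C q e) ys) s"
        unfolding ff_q_def using True R2 mapR s'_def by simp
      finally show ?thesis .
    qed
  qed
qed

lemma hom_sg:
  assumes len: "length xs = ar \<sigma>" and xC: "set xs \<subseteq> C"
  shows "Rtop C q e (sg \<sigma> xs) = ff_sg C sg \<sigma> (map (Rtop C q e) xs)"
proof -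
  define M where "M = dim q e (sg \<sigma> xs) + sum_list (map (dim q e) xs)"
  have sC: "sg \<sigma> xs \<in> C" using sg_C len xC by simp
  have R1: "Rtop C q e (sg \<sigma> xs) = tv (sg \<sigma> xs) M" using Rtop_eq sC M_def by simp
  have R3: "Rtop C q e y = tv y M" if "y \<in> set xs" for y
  proof -
    have "dim q e y \<le> M" using sum_list_ge_nat[OF that, of "dim q e"] M_def by simp
    then show ?thesis using Rtop_eq xC that by auto
  qed
  show ?thesis
  proof (rule ext)
    fix s
    show "Rtop C q e (sg \<sigma> xs) s = ff_sg C sg \<sigma> (map (Rtop C q e) xs) s"
    proof (cases "s \<in> seqs C")
      case False then show ?thesis unfolding R1 tv_def ff_sg_def by simp
    next
      case True
      let ?ss = "map s [1..<M+1]"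
      have ssC: "set ?ss \<subseteq> C" using True by (rule seqs_sub)
      have mapR: "map (\<lambda>\<psi>. \<psi> s) (map (Rtop C q e) xs) = map (\<lambda>y. q M y ?ss) xs"
        using R3 True by (simp add: tv_def)
      have "Rtop C q e (sg \<sigma> xs) s = q M (sg \<sigma> xs) ?ss" using True R1 tv_def by simp
      also have "\<dots> = sg \<sigma> (map (\<lambda>y. q M y ?ss) xs)" using C6 len xC ssC by simp
      also have "\<dots> = ff_sg C sg \<sigma> (map (Rtop C q e) xs) s"
        unfolding ff_sg_def using True mapR by (simp del: map_map)
      finally show ?thesis .
    qed
  qed
qed

lemma hom_e:
  assumes i: "1 \<le> i" shows "Rtop C q e (e i) = ff_e C i"
proof -
  define M where "M = i + dim q e (e i)"
  have R1: "Rtop C q e (e i) = tv (e i) M" using Rtop_eq e_C[OF i] M_def by simp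
  show ?thesis
  proof (rule ext)
    fix s
    show "Rtop C q e (e i) s = ff_e C i s"
    proof (cases "s \<in> seqs C")
      case False then show ?thesis unfolding R1 tv_def ff_e_def by simp
    next
      case True
      have "q M (e i) (map s [1..<M+1]) = map s [1..<M+1] ! (i - 1)"
        using C1[of i M] i M_def seqs_sub[OF True] by simp
      also have "\<dots> = s i" using i M_def by simp
      finally show ?thesis unfolding R1 tv_def ff_e_def using True by simp
    qed
  qed
qed

lemma inj: "inj_on (Rtop C q e) C"
proof (rule inj_onI)
  fix a b assume a: "a \<in> C" and b: "b \<in> C" and eq: "Rtop C q e a = Rtop C q e b"
  define M where "M = dim q e a + dim q e b"
  define s0 where "s0 = (\<lambda>i::nat. if i = 0 then undefined else e i)"
  have s0: "s0 \<in> seqs C" unfolding seqs_def s0_def using e_C by auto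
  have ms: "map s0 [1..<M+1] = map e [1..<M+1]" unfolding s0_def by simp
  have "a = tv a M s0" unfolding tv_def by (simp only: s0 ms if_True C3[OF a])
  also have "\<dots> = Rtop C q e a s0" using Rtop_eq[OF a, of M] M_def by simp
  also have "\<dots> = Rtop C q e b s0" using eq by simp
  also have "\<dots> = tv b M s0" using Rtop_eq[OF b, of M] M_def by simp
  also have "\<dots> = b" unfolding tv_def by (simp only: s0 ms if_True C3[OF b])
  finally show "a = b" .
qed

lemma in_FF: "a \<in> C \<Longrightarrow> Rtop C q e a \<in> FF C"
  using Rtop_eq[of a "dim q e a"] q_C seqs_sub unfolding FF_def tv_def by auto

end

lemma lift_list:
  "set ps \<subseteq> f ` A \<Longrightarrow> \<exists>xs. ps = map f xs \<and> set xs \<subseteq> A"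
proof (induction ps)
  case Nil then show ?case by simp
next
  case (Cons p ps)
  then obtain xs where "ps = map f xs" "set xs \<subseteq> A" by auto
  moreover obtain x where "x \<in> A" "p = f x" using Cons.prems by auto
  ultimately show ?case by (intro exI[of _ "x # xs"]) auto
qed

theorem theorem7p6:
  fixes ar :: "'s \<Rightarrow> nat" and C :: "'c set" and sg :: "'s \<Rightarrow> 'c list \<Rightarrow> 'c"
    and q :: "nat \<Rightarrow> 'c \<Rightarrow> 'c list \<Rightarrow> 'c" and e :: "nat \<Rightarrow> 'c"
  assumes "clone_alg ar C sg q e"
    and "\<forall>a\<in>C. finite_dim q e a"
  defines "B \<equiv> Rtop C q e ` C"
  shows
    \<comment> \<open>B is a subuniverse of the full functional clone tau-algebra with value domain (C, sg)\<close>
    "B \<subseteq> FF C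
     \<and> (\<forall>i\<ge>1. ff_e C i \<in> B)
     \<and> (\<forall>n \<phi> \<psi>s. \<phi> \<in> B \<longrightarrow> length \<psi>s = n \<longrightarrow> set \<psi>s \<subseteq> B \<longrightarrow> ff_q C n \<phi> \<psi>s \<in> B)
     \<and> (\<forall>\<sigma> \<psi>s. length \<psi>s = ar \<sigma> \<longrightarrow> set \<psi>s \<subseteq> B \<longrightarrow> ff_sg C sg \<sigma> \<psi>s \<in> B)
     \<comment> \<open>a \<mapsto> R(a)^top is a bijection from C onto B and a homomorphism\<close>
     \<and> bij_betw (Rtop C q e) C B
     \<and> (\<forall>i\<ge>1. Rtop C q e (e i) = ff_e C i)
     \<and> (\<forall>n x ys. x \<in> C \<longrightarrow> length ys = n \<longrightarrow> set ys \<subseteq> C \<longrightarrow>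
          Rtop C q e (q n x ys) = ff_q C n (Rtop C q e x) (map (Rtop C q e) ys))
     \<and> (\<forall>\<sigma> xs. length xs = ar \<sigma> \<longrightarrow> set xs \<subseteq> C \<longrightarrow>
          Rtop C q e (sg \<sigma> xs) = ff_sg C sg \<sigma> (map (Rtop C q e) xs))"
proof -
  interpret CA ar C sg q e using assms(1,2) by unfold_locales
  have Bd: "B = Rtop C q e ` C" using assms(3) by simp
  have h1: "B \<subseteq> FF C" using in_FF Bd by auto
  have h2: "\<forall>i\<ge>1. ff_e C i \<in> B"
  proof (intro allI impI)
    fix i :: nat assume i: "1 \<le> i"
    have "Rtop C q e (e i) \<in> B" using Bd e_C[OF i] by simp
    then show "ff_e C i \<in> B" using hom_e[OF i] by simp
  qed
  have h3: "\<forall>n \<phi> \<psi>s. \<phi> \<in> B \<longrightarrow> length \<psi>s = n \<longrightarrow> set \<psi>s \<subseteq> B \<longrightarrow> ff_q C n \<phi> \<psi>s \<in> B"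
  proof (intro allI impI)
    fix n \<phi> \<psi>s assume p: "\<phi> \<in> B" "length \<psi>s = n" "set \<psi>s \<subseteq> B"
    obtain x where x: "x \<in> C" "\<phi> = Rtop C q e x" using p(1) Bd by auto
    obtain ys where ys: "\<psi>s = map (Rtop C q e) ys" "set ys \<subseteq> C" using lift_list p(3) Bd by metis
    have "ff_q C n \<phi> \<psi>s = Rtop C q e (q n x ys)" using hom_q x ys p(2) by simp
    moreover have "q n x ys \<in> C" using q_C x ys p(2) by simp
    ultimately show "ff_q C n \<phi> \<psi>s \<in> B" using Bd by simp
  qed
  have h4: "\<forall>\<sigma> \<psi>s. length \<psi>s = ar \<sigma> \<longrightarrow> set \<psi>s \<subseteq> B \<longrightarrow> ff_sg C sg \<sigma> \<psi>s \<in> B"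
  proof (intro allI impI)
    fix \<sigma> \<psi>s assume p: "length \<psi>s = ar \<sigma>" "set \<psi>s \<subseteq> B"
    obtain ys where ys: "\<psi>s = map (Rtop C q e) ys" "set ys \<subseteq> C" using lift_list p(2) Bd by metis
    have "ff_sg C sg \<sigma> \<psi>s = Rtop C q e (sg \<sigma> ys)" using hom_sg ys p(1) by simp
    moreover have "sg \<sigma> ys \<in> C" using sg_C ys p(1) by simp
    ultimately show "ff_sg C sg \<sigma> \<psi>s \<in> B" using Bd by simp
  qed
  have h5: "bij_betw (Rtop C q e) C B" using inj Bd by (simp add: bij_betw_def)
  have h6: "\<forall>i\<ge>1. Rtop C q e (e i) = ff_e C i" using hom_e by simp
  have h7: "\<forall>n x ys. x \<in> C \<longrightarrow> length ys = n \<longrightarrow> set ys \<subseteq> C \<longrightarrow>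
          Rtop C q e (q n x ys) = ff_q C n (Rtop C q e x) (map (Rtop C q e) ys)"
    using hom_q by simp
  have h8: "\<forall>\<sigma> xs. length xs = ar \<sigma> \<longrightarrow> set xs \<subseteq> C \<longrightarrow>
          Rtop C q e (sg \<sigma> xs) = ff_sg C sg \<sigma> (map (Rtop C q e) xs)"
    using hom_sg by simp
  show ?thesis using h1 h2 h3 h4 h5 h6 h7 h8 by (intro conjI)
qed

end
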